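(* Let $p$ be a prime, let $C_p\le S_p$ be cyclic of order $p$ acting regularly, and let $k\ge1$. Let $\Omega=\overline{C_p}^k\subseteq\{0,1\}^{kp^2}$. Let $Q=C_p^k$ act on $\Omega$ by $(x_1,\dots,x_k)(M_1,\dots,M_k)=(\overline{x_1}M_1,\dots,\overline{x_k}M_k)$. This is induced by a faithful permutation of the $kp^2$ coordinates, so $Q\le S_{kp^2}$. Let $P=\{(x_1,\dots,x_k)\in C_p^k: x_1x_2\cdots x_k=1\}$. Then $\beta_{Q,\Omega,d}(P,P)\ge p^{d(k^{1/d}-1)}$ for all $d\ge1$, and $\beta_{Q,\Omega}(P,P)\ge p^{\log_2 k}$.
   Context: $\overline{x}$ denotes the permutation matrix of a permutation $x$, and $\overline{C_p}$ is the set of these matrices for $x\in C_p$. General framework. Let $Q\le S_m$ act on $\{0,1\}^m$ by permuting coordinates, and let $\Omega\subseteq\{0,1\}^m$ be $Q$-invariant. For $f$ on $\Omega$, $\mathrm{Stab}_Q(f)=\{\pi\in Q: f(\pi x)=f(x)\ \forall x\in\Omega\}$. $\mathcal B_{Q,\Omega}$ is the set of $\mathrm{Stab}_Q(f)$ for $f:\Omega\to\{0,1\}$, and $\mathcal N_{Q,\Omega}$ is the set of $\mathrm{Stab}_Q(f)$ for $f:\Omega\to\mathbb N$. Let $\chi_i(x)=x_i$. For $H\le K\le Q$ with $K\in\mathcal B_{Q,\Omega}$, define $\beta_{Q,\Omega,d}(H,K)\in\mathbb N\cup\{\infty\}$ inductively. First, $\beta_{Q,\Omega,0}(H,K)$ equals: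 - $0$ if $H=Q$; - $1$ if $H<Q$ and $H=\mathrm{Stab}_Q(\chi_i|_\Omega)$ for some $i$; - $\infty$ otherwise. For $d\ge1$, $\beta_{Q,\Omega,d}(H,K)=\min\max_{i\in[r]}[H_i:H_i\cap U_i]\,\beta_{Q,\Omega,d-1}(U_i,V_i)$. The minimum is over tuples $(r,(H_i),(U_i),(L_i),(V_i))$ with $r\in\mathbb N$, $H_i,U_i\le Q$, $L_i\in\mathcal N_{Q,\Omega}$ and $V_i\in\mathcal B_{Q,\Omega}$ such that: - (a) $U_i\le V_i$ and $H_i\le L_i$; - (b) $\bigcap_i H_i=H$; - (c) $\bigcap_i L_i\le K$; - (d) $\bigcap_{h\in H_i}h^{-1}U_ih\le H_i$; - (e) $\bigcap_{h\in H_i}h^{-1}V_ih\le L_i$. Finally, $\beta_{Q,\Omega}(H,K)=\lim_{d\to\infty}\beta_{Q,\Omega,d}(H,K)$. *)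

theory Defs
  imports "HOL-Analysis.Analysis" "HOL-Library.Extended_Real"
begin

text \<open>Coordinates are elements of a finite index set I (of type 'c); points of
  {0,1}^I are functions 'c \<Rightarrow> bool; permutations of coordinates are
  functions 'c \<Rightarrow> 'c.\<close>

definition act :: "('c \<Rightarrow> 'c) \<Rightarrow> ('c \<Rightarrow> bool) \<Rightarrow> ('c \<Rightarrow> bool)" where
  "act \<pi> x = x \<circ> inv \<pi>"

definition subgrp :: "('c \<Rightarrow> 'c) set \<Rightarrow> ('c \<Rightarrow> 'c) set \<Rightarrow> bool" where
  "subgrp H Q \<longleftrightarrow> H \<subseteq> Q \<and> id \<in> H \<and> (\<forall>a\<in>H. \<forall>b\<in>H. a \<circ> b \<in> H) \<and> (\<forall>a\<in>H. inv a \<in> H)"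

definition Stab :: "('c \<Rightarrow> 'c) set \<Rightarrow> ('c \<Rightarrow> bool) set \<Rightarrow> (('c \<Rightarrow> bool) \<Rightarrow> 'b) \<Rightarrow> ('c \<Rightarrow> 'c) set" where
  "Stab Q \<Omega> f = {\<pi> \<in> Q. \<forall>x\<in>\<Omega>. f (act \<pi> x) = f x}"

definition Bset :: "('c \<Rightarrow> 'c) set \<Rightarrow> ('c \<Rightarrow> bool) set \<Rightarrow> ('c \<Rightarrow> 'c) set set" where
  "Bset Q \<Omega> = {Stab Q \<Omega> f | f :: ('c \<Rightarrow> bool) \<Rightarrow> bool. True}"

definition Nset :: "('c \<Rightarrow> 'c) set \<Rightarrow> ('c \<Rightarrow> bool) set \<Rightarrow> ('c \<Rightarrow> 'c) set set" where
  "Nset Q \<Omega> = {Stab Q \<Omega> f | f :: ('c \<Rightarrow> bool) \<Rightarrow> nat. True}"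

definition conj_core :: "('c \<Rightarrow> 'c) set \<Rightarrow> ('c \<Rightarrow> 'c) set \<Rightarrow> ('c \<Rightarrow> 'c) set" where
  "conj_core H U = (\<Inter>h\<in>H. (\<lambda>u. inv h \<circ> u \<circ> h) ` U)"

definition idx :: "('c \<Rightarrow> 'c) set \<Rightarrow> ('c \<Rightarrow> 'c) set \<Rightarrow> nat" where
  "idx H U = card H div card (H \<inter> U)"

text \<open>Admissible tuples (r, (H_i), (U_i), (L_i), (V_i)) for \<beta>_d(H,K), d \<ge> 1, indices i < r.
  Intersections of families are taken inside Q (so the empty intersection is Q).\<close>
definition admissible ::
  "('c \<Rightarrow> 'c) set \<Rightarrow> ('c \<Rightarrow> bool) set \<Rightarrow> ('c \<Rightarrow> 'c) set \<Rightarrow> ('c \<Rightarrow> 'c) set \<Rightarrow>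
   nat \<times> (nat \<Rightarrow> ('c \<Rightarrow> 'c) set) \<times> (nat \<Rightarrow> ('c \<Rightarrow> 'c) set) \<times> (nat \<Rightarrow> ('c \<Rightarrow> 'c) set) \<times> (nat \<Rightarrow> ('c \<Rightarrow> 'c) set) \<Rightarrow> bool" where
  "admissible Q \<Omega> H K t = (case t of (r, Hs, Us, Ls, Vs) \<Rightarrow>
     (\<forall>i<r. subgrp (Hs i) Q \<and> subgrp (Us i) Q \<and> Ls i \<in> Nset Q \<Omega> \<and> Vs i \<in> Bset Q \<Omega>
            \<and> Us i \<subseteq> Vs i \<and> Hs i \<subseteq> Ls i
            \<and> conj_core (Hs i) (Us i) \<subseteq> Hs i
            \<and> conj_core (Hs i) (Vs i) \<subseteq> Ls i)
     \<and> Q \<inter> (\<Inter>i\<in>{..<r}. Hs i) = H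
     \<and> Q \<inter> (\<Inter>i\<in>{..<r}. Ls i) \<subseteq> K)"

primrec beta :: "'c set \<Rightarrow> ('c \<Rightarrow> 'c) set \<Rightarrow> ('c \<Rightarrow> bool) set \<Rightarrow> nat \<Rightarrow>
    ('c \<Rightarrow> 'c) set \<Rightarrow> ('c \<Rightarrow> 'c) set \<Rightarrow> enat" where
  "beta I Q \<Omega> 0 H K =
     (if H = Q then 0
      else if H \<subset> Q \<and> (\<exists>i\<in>I. H = Stab Q \<Omega> (\<lambda>x. x i)) then 1
      else \<infinity>)"
| "beta I Q \<Omega> (Suc d) H K =
     (INF t \<in> {t. admissible Q \<Omega> H K t}.
        (case t of (r, Hs, Us, Ls, Vs) \<Rightarrow>
          (SUP i\<in>{..<r}. enat (idx (Hs i) (Us i)) * beta I Q \<Omega> d (Us i) (Vs i))))"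

definition beta_lim :: "'c set \<Rightarrow> ('c \<Rightarrow> 'c) set \<Rightarrow> ('c \<Rightarrow> bool) set \<Rightarrow>
    ('c \<Rightarrow> 'c) set \<Rightarrow> ('c \<Rightarrow> 'c) set \<Rightarrow> enat" where
  "beta_lim I Q \<Omega> H K = lim (\<lambda>d. beta I Q \<Omega> d H K)"

text \<open>Coordinates of {0,1}^{k p^2}: triples (j,a,b) with j<k, a<p, b<p
  (entry (a,b) of the j-th p\<times>p matrix).\<close>
definition coords :: "nat \<Rightarrow> nat \<Rightarrow> (nat \<times> nat \<times> nat) set" where
  "coords k p = {..<k} \<times> {..<p} \<times> {..<p}"

text \<open>Permutation matrix of x (a permutation of {0..<p}): entry (a,b) is 1 iff a = x b.
  The point (M_1,...,M_k) with M_j = matrix of x_j.\<close>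
definition pmats :: "nat \<Rightarrow> nat \<Rightarrow> (nat \<Rightarrow> nat \<Rightarrow> nat) \<Rightarrow> (nat \<times> nat \<times> nat \<Rightarrow> bool)" where
  "pmats k p x = (\<lambda>(j, a, b). j < k \<and> a < p \<and> b < p \<and> a = x j b)"

definition Omega :: "nat \<Rightarrow> nat \<Rightarrow> (nat \<Rightarrow> nat) set \<Rightarrow> (nat \<times> nat \<times> nat \<Rightarrow> bool) set" where
  "Omega k p Cp = {pmats k p x | x. \<forall>j<k. x j \<in> Cp}"

text \<open>Coordinate permutation induced by (x_1,...,x_k): left multiplication of M_j by the
  matrix of x_j moves entry (a,b) of M_j to (x_j a, b).\<close>
definition qperm :: "nat \<Rightarrow> nat \<Rightarrow> (nat \<Rightarrow> nat \<Rightarrow> nat) \<Rightarrow> (nat \<times> nat \<times> nat \<Rightarrow> nat \<times> nat \<times> nat)" where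
  "qperm k p x = (\<lambda>(j, a, b). if j < k \<and> a < p \<and> b < p then (j, x j a, b) else (j, a, b))"

definition Qgrp :: "nat \<Rightarrow> nat \<Rightarrow> (nat \<Rightarrow> nat) set \<Rightarrow> (nat \<times> nat \<times> nat \<Rightarrow> nat \<times> nat \<times> nat) set" where
  "Qgrp k p Cp = {qperm k p x | x. \<forall>j<k. x j \<in> Cp}"

definition Pgrp :: "nat \<Rightarrow> nat \<Rightarrow> (nat \<Rightarrow> nat) set \<Rightarrow> (nat \<times> nat \<times> nat \<Rightarrow> nat \<times> nat \<times> nat) set" where
  "Pgrp k p Cp = {qperm k p x | x. (\<forall>j<k. x j \<in> Cp) \<and> foldr (\<circ>) (map x [0..<k]) id = id}"

end

theory Submission
  imports Defs "HOL-Algebra.Coset" "HOL-Computational_Algebra.Primes"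
begin
unbundle no m_inv_syntax



locale S6 =
  fixes p k :: nat and Cp :: "(nat \<Rightarrow> nat) set" and g :: "nat \<Rightarrow> nat"
  assumes pr: "prime p" and k1: "k \<ge> 1"
    and perm: "\<forall>x\<in>Cp. x permutes {..<p}"
    and gen: "Cp = range (\<lambda>i. g ^^ i)"
    and cardC: "card Cp = p"
    and reg: "\<forall>a<p. \<forall>b<p. \<exists>!x. x \<in> Cp \<and> x a = b"
begin

lemma p2: "p \<ge> 2" using pr prime_ge_2_nat by blast
lemma finC: "finite Cp" using cardC p2 card.infinite by fastforce

lemma C_perm: "c \<in> Cp \<Longrightarrow> c permutes {..<p}" using perm by blast
lemma C_bij: "c \<in> Cp \<Longrightarrow> bij c" using C_perm permutes_bij by blast
lemma C_lt: "c \<in> Cp \<Longrightarrow> a < p \<Longrightarrow> c a < p"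
  using C_perm[of c] permutes_in_image[of c "{..<p}" a] by simp
lemma C_out: "c \<in> Cp \<Longrightarrow> \<not> a < p \<Longrightarrow> c a = a"
  using C_perm[of c] permutes_not_in[of c "{..<p}" a] by simp
lemma id_C: "id \<in> Cp" unfolding gen by (rule range_eqI[of _ _ 0]) simp
lemma id_funpow: "(id::'a\<Rightarrow>'a) ^^ i = id" by (induct i) auto
lemma g_C: "g \<in> Cp" unfolding gen by (rule range_eqI[of _ _ 1]) simp
lemma C_comp: "c \<in> Cp \<Longrightarrow> d \<in> Cp \<Longrightarrow> c \<circ> d \<in> Cp"
  unfolding gen by (auto simp: funpow_add[symmetric])
lemma C_comm: "c \<in> Cp \<Longrightarrow> d \<in> Cp \<Longrightarrow> c \<circ> d = d \<circ> c"
  unfolding gen by (auto simp: funpow_add[symmetric] add.commute)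

lemma g_order: "\<exists>n>0. g ^^ n = id"
proof -
  have "\<not> inj_on (\<lambda>i. g ^^ i) {0..p}"
  proof
    assume "inj_on (\<lambda>i. g ^^ i) {0..p}"
    then have "card ((\<lambda>i. g ^^ i) ` {0..p}) = p + 1" by (simp add: card_image)
    moreover have "card ((\<lambda>i. g ^^ i) ` {0..p}) \<le> card Cp" using finC by (rule card_mono) (auto simp: gen)
    ultimately show False using cardC by simp
  qed
  then obtain i j where ij: "i \<noteq> j" "g ^^ i = g ^^ j" unfolding inj_on_def by blast
  have *: "\<exists>n>0. g ^^ n = id" if "i < j" "g ^^ i = g ^^ j" for i j
  proof -
    have e: "g ^^ (j - i) \<circ> g ^^ i = g ^^ ((j - i) + i)" by (simp only: funpow_add)
    have h: "(j - i) + i = j" using that by arith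
    have "g ^^ (j - i) \<circ> g ^^ i = id \<circ> g ^^ i" unfolding id_o e h using that(2) by (rule sym)
    moreover have "bij (g ^^ i)" by (rule bij_betw_funpow[OF C_bij[OF g_C]])
    then have s: "g ^^ i \<circ> inv (g ^^ i) = id" using bij_is_surj surj_iff by blast
    ultimately have "g ^^ (j - i) = id"
      by (metis s comp_assoc comp_id)
    then show ?thesis using \<open>i < j\<close> by (intro exI[of _ "j-i"]) auto
  qed
  from ij(1) have "i < j \<or> j < i" by arith
  then show ?thesis using * ij(2) by metis
qed

lemma C_inv: assumes "c \<in> Cp" shows "inv c \<in> Cp" "inv c \<circ> c = id" "c \<circ> inv c = id"
proof -
  obtain n where n: "n > 0" "g ^^ n = id" using g_order by blast
  obtain m where m: "c = g ^^ m" using assms gen by blast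
  have "c \<circ> g ^^ (m * (n - 1)) = g ^^ (m * n)"
    using n by (simp add: m funpow_add[symmetric] algebra_simps)
  also have "\<dots> = (g ^^ n) ^^ m" by (simp add: funpow_mult mult.commute)
  also have "\<dots> = id" by (simp add: n id_funpow)
  finally have e1: "c \<circ> g ^^ (m * (n - 1)) = id" .
  have gc: "g ^^ (m * (n - 1)) \<in> Cp" unfolding gen by (rule rangeI)
  have e2: "g ^^ (m * (n - 1)) \<circ> c = id" using e1 C_comm[OF assms gc] by simp
  have "inv c = g ^^ (m * (n - 1))" by (rule inv_unique_comp[OF e1 e2])
  then show "inv c \<in> Cp" using gen by auto
  show "inv c \<circ> c = id" using C_bij[OF assms] by (simp add: bij_is_inj)
  show "c \<circ> inv c = id" using C_bij[OF assms] bij_is_surj surj_iff by blast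
qed

lemma C_fix: "c \<in> Cp \<Longrightarrow> a < p \<Longrightarrow> c a = a \<Longrightarrow> c = id"
  using reg id_C by (metis id_apply)

lemma C_hit: "a < p \<Longrightarrow> b < p \<Longrightarrow> \<exists>c\<in>Cp. c b = a"
  using reg by blast

lemma g_ne: "g \<noteq> id"
proof
  assume "g = id"
  then have "Cp = {id}" unfolding gen by (auto simp: id_funpow)
  then show False using cardC p2 by simp
qed


abbreviation "Q \<equiv> Qgrp k p Cp"
definition inQ :: "(nat \<Rightarrow> nat \<Rightarrow> nat) \<Rightarrow> bool" where "inQ x \<longleftrightarrow> (\<forall>j<k. x j \<in> Cp)"

lemma qperm_apply: "j<k \<Longrightarrow> a<p \<Longrightarrow> b<p \<Longrightarrow> qperm k p x (j,a,b) = (j, x j a, b)"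
  by (simp add: qperm_def)
lemma qperm_out: "\<not>(j<k \<and> a<p \<and> b<p) \<Longrightarrow> qperm k p x (j,a,b) = (j,a,b)"
  by (auto simp: qperm_def)

lemma qperm_comp: assumes "inQ y" shows "qperm k p x \<circ> qperm k p y = qperm k p (\<lambda>j. x j \<circ> y j)"
proof (rule ext)
  fix c :: "nat \<times> nat \<times> nat" obtain j a b where c: "c = (j,a,b)" by (cases c) auto
  show "(qperm k p x \<circ> qperm k p y) c = qperm k p (\<lambda>j. x j \<circ> y j) c"
  proof (cases "j<k \<and> a<p \<and> b<p")
    case True then have "y j a < p" using assms C_lt inQ_def by blast
    then show ?thesis using True by (simp add: c qperm_apply)
  qed (simp add: c qperm_out)
qed

lemma qperm_id: "qperm k p (\<lambda>_. id) = id" by (auto simp: qperm_def)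
lemma inQ_id: "inQ (\<lambda>_. id)" by (simp add: inQ_def id_C)
lemma inQ_comp: "inQ x \<Longrightarrow> inQ y \<Longrightarrow> inQ (\<lambda>j. x j \<circ> y j)" by (simp add: inQ_def C_comp)
lemma inQ_inv: "inQ x \<Longrightarrow> inQ (\<lambda>j. inv (x j))" by (simp add: inQ_def C_inv)

lemma Q_iff: "q \<in> Q \<longleftrightarrow> (\<exists>x. inQ x \<and> q = qperm k p x)" by (auto simp: Qgrp_def inQ_def)
lemma qperm_Q: "inQ x \<Longrightarrow> qperm k p x \<in> Q" using Q_iff by blast

lemma Q_id: "id \<in> Q" using Q_iff qperm_id inQ_id by metis
lemma Q_comp: "q \<in> Q \<Longrightarrow> r \<in> Q \<Longrightarrow> q \<circ> r \<in> Q"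
  unfolding Q_iff by (metis qperm_comp inQ_comp)
lemma qperm_cong: "(\<And>j. j<k \<Longrightarrow> x j = y j) \<Longrightarrow> qperm k p x = qperm k p y"
  by (auto simp: qperm_def fun_eq_iff)

lemma Q_comm: "q \<in> Q \<Longrightarrow> r \<in> Q \<Longrightarrow> q \<circ> r = r \<circ> q"
proof -
  assume "q \<in> Q" "r \<in> Q"
  then obtain x y where xy: "inQ x" "inQ y" "q = qperm k p x" "r = qperm k p y" unfolding Q_iff by blast
  have 1: "q \<circ> r = qperm k p (\<lambda>j. x j \<circ> y j)" using qperm_comp[OF xy(2)] xy by simp
  have 2: "r \<circ> q = qperm k p (\<lambda>j. y j \<circ> x j)" using qperm_comp[OF xy(1)] xy by simp
  have "qperm k p (\<lambda>j. x j \<circ> y j) = qperm k p (\<lambda>j. y j \<circ> x j)"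
  proof (rule qperm_cong)
    fix j assume "j < k" then have "x j \<in> Cp" "y j \<in> Cp" using xy unfolding inQ_def by blast+
    then show "x j \<circ> y j = y j \<circ> x j" by (rule C_comm)
  qed
  then show ?thesis using 1 2 by simp
qed

lemma qperm_inv1: assumes "inQ x" shows "qperm k p x \<circ> qperm k p (\<lambda>j. inv (x j)) = id"
proof -
  have "qperm k p x \<circ> qperm k p (\<lambda>j. inv (x j)) = qperm k p (\<lambda>j. x j \<circ> inv (x j))"
    by (rule qperm_comp[OF inQ_inv[OF assms]])
  also have "\<dots> = qperm k p (\<lambda>_. id)"
  proof (rule qperm_cong)
    fix j assume "j < k" then have "x j \<in> Cp" using assms unfolding inQ_def by blast
    then show "x j \<circ> inv (x j) = id" by (rule C_inv(3))
  qed
  finally show ?thesis unfolding qperm_id .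
qed

lemma qperm_inv: assumes "inQ x" shows "inv (qperm k p x) = qperm k p (\<lambda>j. inv (x j))"
proof -
  have 1: "qperm k p x \<circ> qperm k p (\<lambda>j. inv (x j)) = id" using qperm_inv1[OF assms] .
  have 2: "qperm k p (\<lambda>j. inv (x j)) \<circ> qperm k p x = id"
    using 1 Q_comm[OF qperm_Q[OF assms] qperm_Q[OF inQ_inv[OF assms]]] by simp
  show ?thesis by (rule inv_unique_comp[OF 1 2])
qed

lemma Q_inv: assumes "q \<in> Q" shows "inv q \<in> Q" "inv q \<circ> q = id" "q \<circ> inv q = id" "bij q"
proof -
  obtain x where x: "inQ x" "q = qperm k p x" using assms Q_iff by blast
  show iq: "inv q \<in> Q" using x qperm_inv qperm_Q inQ_inv by metis
  show 3: "q \<circ> inv q = id" using x qperm_inv qperm_inv1 by metis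
  then show 2: "inv q \<circ> q = id" using Q_comm[OF assms iq] by simp
  show "bij q" using 2 3 by (metis o_bij)
qed

lemma qperm_eq: assumes "inQ x" "inQ y" "qperm k p x = qperm k p y" "j < k" shows "x j = y j"
proof
  fix a show "x j a = y j a"
  proof (cases "a < p")
    case True
    have "qperm k p x (j,a,0) = qperm k p y (j,a,0)" using assms by simp
    then show ?thesis using True assms(4) p2 by (simp add: qperm_apply)
  next
    case False then show ?thesis using assms C_out inQ_def by metis
  qed
qed

definition agr :: "nat \<Rightarrow> (nat\<times>nat\<times>nat \<Rightarrow> nat\<times>nat\<times>nat) \<Rightarrow> (nat\<times>nat\<times>nat \<Rightarrow> nat\<times>nat\<times>nat) \<Rightarrow> bool"
  where "agr j h x \<longleftrightarrow> (\<forall>a<p. h (j,a,0) = x (j,a,0))"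
definition cert where "cert H x A \<longleftrightarrow> (\<forall>h\<in>H. \<exists>j\<in>A. \<not> agr j h x)"
definition cc where "cc H t \<longleftrightarrow> (\<forall>x\<in>Q-H. \<exists>A\<subseteq>{..<k}. card A \<le> t \<and> cert H x A)"

lemma agr_left: "agr j h x \<Longrightarrow> agr j (c \<circ> h) (c \<circ> x)" by (simp add: agr_def)
lemma agr_qperm: "j < k \<Longrightarrow> agr j (qperm k p x) (qperm k p y) \<longleftrightarrow> (\<forall>a<p. x j a = y j a)"
  using p2 by (simp add: agr_def qperm_apply)

lemma Q_image: "Q = (\<lambda>x. qperm k p x) ` (PiE {..<k} (\<lambda>_. Cp))"
proof
  show "Q \<subseteq> (\<lambda>x. qperm k p x) ` (PiE {..<k} (\<lambda>_. Cp))"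
  proof
    fix q assume "q \<in> Q" then obtain x where x: "inQ x" "q = qperm k p x" using Q_iff by blast
    have "qperm k p (restrict x {..<k}) = qperm k p x" by (auto simp: qperm_def fun_eq_iff)
    moreover have "restrict x {..<k} \<in> PiE {..<k} (\<lambda>_. Cp)" using x inQ_def by auto
    ultimately show "q \<in> (\<lambda>x. qperm k p x) ` (PiE {..<k} (\<lambda>_. Cp))" using x by (metis image_eqI)
  qed
  show "(\<lambda>x. qperm k p x) ` (PiE {..<k} (\<lambda>_. Cp)) \<subseteq> Q" using qperm_Q inQ_def by auto
qed

lemma card_Q: "card Q = p ^ k"
proof -
  have "inj_on (\<lambda>x. qperm k p x) (PiE {..<k} (\<lambda>_. Cp))"
  proof (rule inj_onI)
    fix x y assume xy: "x \<in> PiE {..<k} (\<lambda>_. Cp)" "y \<in> PiE {..<k} (\<lambda>_. Cp)" "qperm k p x = qperm k p y"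
    then have "inQ x" "inQ y" by (auto simp: inQ_def)
    then have "\<forall>j<k. x j = y j" using qperm_eq xy(3) by blast
    then show "x = y" using xy(1,2) by (metis PiE_ext lessThan_iff)
  qed
  then have "card Q = card (PiE {..<k} (\<lambda>_. Cp))" by (simp add: Q_image card_image)
  also have "\<dots> = p ^ k" by (simp add: card_PiE cardC)
  finally show ?thesis .
qed

lemma fin_Q: "finite Q" using card_Q p2 card.infinite by fastforce

definition Gq :: "(nat\<times>nat\<times>nat \<Rightarrow> nat\<times>nat\<times>nat) monoid" where
  "Gq = \<lparr>carrier = Q, mult = (\<circ>), one = id\<rparr>"

lemma group_Gq: "group Gq"
  unfolding Gq_def
proof (rule groupI)
  fix x assume "x \<in> carrier \<lparr>carrier = Q, mult = (\<circ>), one = id\<rparr>"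
  then have "x \<in> Q" by simp
  then show "\<exists>y\<in>carrier \<lparr>carrier = Q, mult = (\<circ>), one = id\<rparr>. y \<otimes>\<^bsub>\<lparr>carrier = Q, mult = (\<circ>), one = id\<rparr>\<^esub> x = \<one>\<^bsub>\<lparr>carrier = Q, mult = (\<circ>), one = id\<rparr>\<^esub>"
    using Q_inv(1,2) by (intro bexI[of _ "inv x"]) auto
qed (auto simp: Q_comp Q_id comp_assoc)

lemma minv_Gq: "q \<in> Q \<Longrightarrow> m_inv Gq q = inv q"
  using group.inv_equality[OF group_Gq, of "inv q" q] Q_inv unfolding Gq_def by simp

lemma subgroup_Gq: assumes "subgrp H Q" shows "subgroup H Gq"
proof -
  have "H \<subseteq> Q" "id \<in> H" "\<forall>a\<in>H. \<forall>b\<in>H. a \<circ> b \<in> H" "\<forall>a\<in>H. inv a \<in> H"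
    using assms unfolding subgrp_def by auto
  then show ?thesis
    by (intro group.subgroupI[OF group_Gq]) (auto simp: Gq_def minv_Gq[unfolded Gq_def] subsetD)
qed

lemma sub_card: assumes "subgrp H Q" shows "\<exists>i. card H = p ^ i"
proof -
  have "card (rcosets\<^bsub>Gq\<^esub> H) * card H = order Gq"
    using group.lagrange[OF group_Gq subgroup_Gq[OF assms]] .
  then have "card H dvd p ^ k" using card_Q by (simp add: order_def Gq_def) (metis dvd_triv_right)
  then show ?thesis using divides_primepow_nat[OF pr] by blast
qed

lemma sub_fin: "subgrp H Q \<Longrightarrow> finite H" using fin_Q unfolding subgrp_def using finite_subset by blast
lemma sub_pos: "subgrp H Q \<Longrightarrow> card H > 0" using sub_fin subgrp_def card_gt_0_iff by blast

lemma sub_proper: assumes "subgrp A Q" "subgrp B Q" "A \<subseteq> B" "A \<noteq> B" shows "card A * p \<le> card B"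
proof -
  obtain a b where ab: "card A = p ^ a" "card B = p ^ b" using sub_card assms by metis
  have "card A < card B" using assms sub_fin psubset_card_mono by blast
  then have "a < b" using ab p2 power_less_imp_less_exp[of p a b] by simp
  then have "p ^ Suc a \<le> p ^ b" using p2 by (intro power_increasing) auto
  then have "p ^ a * p \<le> p ^ b" by (simp add: mult.commute)
  then show ?thesis using ab by simp
qed

end



context S6 begin

lemma agr_refl: "agr j h h" by (simp add: agr_def)
lemma agr_sym: "agr j h x \<Longrightarrow> agr j x h" by (simp add: agr_def)
lemma agr_trans: "agr j h x \<Longrightarrow> agr j x y \<Longrightarrow> agr j h y" by (simp add: agr_def)

lemma sub_Q: "subgrp H Q \<Longrightarrow> h \<in> H \<Longrightarrow> h \<in> Q" unfolding subgrp_def by blast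
lemma sub_id: "subgrp H Q \<Longrightarrow> id \<in> H" unfolding subgrp_def by blast
lemma sub_comp: "subgrp H Q \<Longrightarrow> a \<in> H \<Longrightarrow> b \<in> H \<Longrightarrow> a \<circ> b \<in> H" unfolding subgrp_def by blast
lemma sub_inv: "subgrp H Q \<Longrightarrow> a \<in> H \<Longrightarrow> inv a \<in> H" unfolding subgrp_def by blast

lemma cert_lift:
  assumes U: "subgrp U Q" and ccU: "cc U t"
  shows "subgrp H Q \<Longrightarrow> U \<subseteq> H \<Longrightarrow> card H \<le> p ^ e * card U \<Longrightarrow> cc H (Suc e * t)"
proof (induction e arbitrary: H)
  case 0
  have "U = H" using card_seteq[OF sub_fin[OF 0(1)] 0(2)] 0(3) by simp
  then show ?case using ccU by simp
next
  case (Suc e)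
  note HQ = Suc.prems(1)
  show ?case unfolding cc_def
  proof
    fix x assume x: "x \<in> Q - H"
    then have xU: "x \<in> Q - U" using Suc.prems(2) by blast
    obtain B where B: "B \<subseteq> {..<k}" "card B \<le> t" "cert U x B" using ccU xU unfolding cc_def by blast
    show "\<exists>A\<subseteq>{..<k}. card A \<le> Suc (Suc e) * t \<and> cert H x A"
    proof (cases "\<exists>s\<in>H. \<forall>j\<in>B. agr j s x")
      case False
      then have "cert H x B" unfolding cert_def by blast
      moreover have "card B \<le> Suc (Suc e) * t" using B(2) by simp
      ultimately show ?thesis using B(1) by blast
    next
      case True
      then obtain s where s: "s \<in> H" "\<And>j. j \<in> B \<Longrightarrow> agr j s x" by blast
      have sQ: "s \<in> Q" using sub_Q[OF HQ s(1)] .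
      define H' where "H' = {z \<circ> u | z u. z \<in> H \<and> (\<forall>j\<in>B. agr j z id) \<and> u \<in> U}"
      have UH': "U \<subseteq> H'"
      proof
        fix u assume "u \<in> U" then show "u \<in> H'" unfolding H'_def
          using sub_id[OF HQ] agr_refl by (intro CollectI exI[of _ id] exI[of _ u]) auto
      qed
      have H'H: "H' \<subseteq> H"
        unfolding H'_def using Suc.prems(2) sub_comp[OF HQ] by blast
      have H'sub: "subgrp H' Q"
        unfolding subgrp_def
      proof (intro conjI ballI)
        show "H' \<subseteq> Q" using H'H HQ unfolding subgrp_def by blast
        show "id \<in> H'" using UH' sub_id[OF U] by blast
      next
        fix a b assume a: "a \<in> H'" and b: "b \<in> H'"
        obtain z u where zu: "a = z \<circ> u" "z \<in> H" "\<forall>j\<in>B. agr j z id" "u \<in> U" using a H'_def by blast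
        obtain z' u' where zu': "b = z' \<circ> u'" "z' \<in> H" "\<forall>j\<in>B. agr j z' id" "u' \<in> U" using b H'_def by blast
        have c: "u \<circ> z' = z' \<circ> u" using Q_comm sub_Q[OF U zu(4)] sub_Q[OF HQ zu'(2)] by blast
        have "a \<circ> b = (z \<circ> z') \<circ> (u \<circ> u')"
          using c unfolding zu(1) zu'(1) by (metis comp_assoc)
        moreover have "z \<circ> z' \<in> H" using sub_comp[OF HQ zu(2) zu'(2)] .
        moreover have "\<forall>j\<in>B. agr j (z \<circ> z') id"
        proof
          fix j assume j: "j \<in> B"
          have "agr j (z \<circ> z') (z \<circ> id)" using agr_left zu'(3) j by blast
          then show "agr j (z \<circ> z') id" using zu(3) j agr_trans by simp
        qed
        moreover have "u \<circ> u' \<in> U" using sub_comp[OF U zu(4) zu'(4)] .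
        ultimately show "a \<circ> b \<in> H'" unfolding H'_def by blast
      next
        fix a assume a: "a \<in> H'"
        obtain z u where zu: "a = z \<circ> u" "z \<in> H" "\<forall>j\<in>B. agr j z id" "u \<in> U" using a H'_def by blast
        have zQ: "z \<in> Q" and uQ: "u \<in> Q" using sub_Q[OF HQ zu(2)] sub_Q[OF U zu(4)] by auto
        have "inv a = inv u \<circ> inv z" unfolding zu(1) using Q_inv(4)[OF zQ] Q_inv(4)[OF uQ] by (rule o_inv_distrib)
        also have "\<dots> = inv z \<circ> inv u" using Q_comm Q_inv(1) zQ uQ by blast
        finally have ia: "inv a = inv z \<circ> inv u" .
        have "\<forall>j\<in>B. agr j (inv z) id"
        proof
          fix j assume j: "j \<in> B"
          have "agr j (inv z \<circ> z) (inv z \<circ> id)" using agr_left zu(3) j by blast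
          then have "agr j id (inv z)" using Q_inv(2)[OF zQ] by simp
          then show "agr j (inv z) id" by (rule agr_sym)
        qed
        then show "inv a \<in> H'" unfolding H'_def ia using sub_inv[OF HQ zu(2)] sub_inv[OF U zu(4)] by blast
      qed
      have ne: "H' \<noteq> H"
      proof
        assume eq: "H' = H"
        have "inv s \<in> H'" using eq sub_inv[OF HQ s(1)] by simp
        then obtain z u where zu: "inv s = z \<circ> u" "z \<in> H" "\<forall>j\<in>B. agr j z id" "u \<in> U" using H'_def by blast
        have uQ: "u \<in> Q" using sub_Q[OF U zu(4)] .
        have "s \<circ> z = (s \<circ> z) \<circ> (u \<circ> inv u)" using Q_inv(3)[OF uQ] by simp
        also have "\<dots> = (s \<circ> inv s) \<circ> inv u" unfolding zu(1) by (simp add: comp_assoc)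
        also have "\<dots> = inv u" using Q_inv(3)[OF sQ] by simp
        finally have szU: "s \<circ> z \<in> U" using sub_inv[OF U zu(4)] by simp
        have "\<forall>j\<in>B. agr j (s \<circ> z) x"
        proof
          fix j assume j: "j \<in> B"
          have "agr j (s \<circ> z) (s \<circ> id)" using agr_left zu(3) j by blast
          then show "agr j (s \<circ> z) x" using s(2)[OF j] agr_trans by simp
        qed
        then show False using B(3) szU unfolding cert_def by blast
      qed
      have "card H' * p \<le> card H" using sub_proper[OF H'sub HQ H'H ne] .
      also have "\<dots> \<le> p ^ Suc e * card U" using Suc.prems(3) .
      finally have "card H' \<le> p ^ e * card U" using p2 by (simp add: mult.commute mult.left_commute)
      then have ccH': "cc H' (Suc e * t)" using Suc.IH[OF H'sub UH'] by blast
      define x' where "x' = inv s \<circ> x"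
      have xQ: "x \<in> Q" using x by blast
      have x'Q: "x' \<in> Q" unfolding x'_def using Q_comp Q_inv(1) sQ xQ by blast
      have "x' \<notin> H'"
      proof
        assume "x' \<in> H'"
        then have "s \<circ> x' \<in> H" using H'H sub_comp[OF HQ s(1)] by blast
        moreover have "s \<circ> x' = x" unfolding x'_def using Q_inv(3)[OF sQ] by (simp add: o_assoc)
        ultimately show False using x by simp
      qed
      then obtain C where C: "C \<subseteq> {..<k}" "card C \<le> Suc e * t" "cert H' x' C"
        using ccH' x'Q unfolding cc_def by blast
      have "cert H x (B \<union> C)"
        unfolding cert_def
      proof
        fix h assume h: "h \<in> H"
        show "\<exists>j\<in>B \<union> C. \<not> agr j h x"
        proof (rule ccontr)
          assume "\<not> (\<exists>j\<in>B \<union> C. \<not> agr j h x)"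
          then have ag: "\<And>j. j \<in> B \<union> C \<Longrightarrow> agr j h x" by blast
          define z where "z = inv s \<circ> h"
          have zH: "z \<in> H" unfolding z_def using sub_comp[OF HQ sub_inv[OF HQ s(1)] h] .
          have "\<forall>j\<in>B. agr j z id"
          proof
            fix j assume j: "j \<in> B"
            have "agr j h s" using ag[of j] s(2)[OF j] j agr_sym agr_trans by blast
            then have "agr j (inv s \<circ> h) (inv s \<circ> s)" by (rule agr_left)
            then show "agr j z id" unfolding z_def using Q_inv(2)[OF sQ] by simp
          qed
          then have "z \<circ> id \<in> H'" unfolding H'_def using zH sub_id[OF U] by blast
          then have zH': "z \<in> H'" by simp
          have "\<forall>j\<in>C. agr j z x'" unfolding z_def x'_def using ag agr_left by blast
          then show False using C(3) zH' unfolding cert_def by blast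
        qed
      qed
      moreover have "card (B \<union> C) \<le> Suc (Suc e) * t"
        using card_Un_le[of B C] B(2) C(2) by simp
      moreover have "B \<union> C \<subseteq> {..<k}" using B(1) C(1) by blast
      ultimately show ?thesis by blast
    qed
  qed
qed


abbreviation "Om \<equiv> Omega k p Cp"

lemma Om_iff: "M \<in> Om \<longleftrightarrow> (\<exists>x. inQ x \<and> M = pmats k p x)" by (auto simp: Omega_def inQ_def)

lemma pmats_apply: "pmats k p x (j,a,b) = (j<k \<and> a<p \<and> b<p \<and> a = x j b)" by (simp add: pmats_def)

lemma act_pmats: assumes y: "inQ y" and x: "inQ x"
  shows "act (qperm k p y) (pmats k p x) = pmats k p (\<lambda>j. y j \<circ> x j)"
proof (rule ext)
  fix c :: "nat \<times> nat \<times> nat" obtain j a b where c: "c = (j,a,b)" by (cases c) auto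
  have iv: "inv (qperm k p y) = qperm k p (\<lambda>j. inv (y j))" using qperm_inv[OF y] .
  show "act (qperm k p y) (pmats k p x) c = pmats k p (\<lambda>j. y j \<circ> x j) c"
  proof (cases "j<k \<and> a<p \<and> b<p")
    case True
    then have yC: "y j \<in> Cp" using y inQ_def by blast
    have lt: "inv (y j) a < p" using C_lt[OF C_inv(1)[OF yC]] True by blast
    have "(inv (y j) a = x j b) = (y j (x j b) = a)"
      using C_bij[OF yC] by (metis bij_inv_eq_iff)
    then show ?thesis using True lt unfolding act_def c iv by (auto simp: qperm_apply pmats_apply)
  next
    case False
    then show ?thesis unfolding act_def c iv by (auto simp: qperm_out pmats_apply)
  qed
qed

lemma agr_id_iff: assumes "inQ y" "j < k" shows "agr j (qperm k p y) id \<longleftrightarrow> y j = id"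
proof -
  have yC: "y j \<in> Cp" using assms inQ_def by blast
  have "agr j (qperm k p y) id \<longleftrightarrow> agr j (qperm k p y) (qperm k p (\<lambda>_. id))" by (simp add: qperm_id)
  also have "\<dots> \<longleftrightarrow> (\<forall>a<p. y j a = a)" using agr_qperm[OF assms(2)] by simp
  also have "\<dots> \<longleftrightarrow> y j = id"
  proof
    assume "\<forall>a<p. y j a = a"
    then show "y j = id" using C_fix[OF yC, of 0] p2 by simp
  qed simp
  finally show ?thesis .
qed

lemma Stab_coord: assumes "j<k" "a<p" "b<p"
  shows "Stab Q Om (\<lambda>M. M (j,a,b)) = {q\<in>Q. agr j q id}"
proof (rule equalityI; rule subsetI)
  fix q assume q: "q \<in> Stab Q Om (\<lambda>M. M (j,a,b))"
  then have qQ: "q \<in> Q" and st: "\<forall>M\<in>Om. act q M (j,a,b) = M (j,a,b)" unfolding Stab_def by auto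
  obtain y where y: "inQ y" "q = qperm k p y" using qQ Q_iff by blast
  obtain c where c: "c \<in> Cp" "c b = a" using C_hit assms by blast
  define x where "x = (\<lambda>i. if i = j then c else (id::nat\<Rightarrow>nat))"
  have x: "inQ x" unfolding inQ_def x_def using c id_C by auto
  have "act q (pmats k p x) (j,a,b) = pmats k p x (j,a,b)" using st x Om_iff by blast
  then have "y j a = a" unfolding y(2) act_pmats[OF y(1) x] using assms c by (simp add: pmats_apply x_def)
  then have "y j = id" using C_fix assms y inQ_def by blast
  then show "q \<in> {q\<in>Q. agr j q id}" using qQ y agr_id_iff assms by blast
next
  fix q assume q: "q \<in> {q\<in>Q. agr j q id}"
  then obtain y where y: "inQ y" "q = qperm k p y" using Q_iff by blast
  have yj: "y j = id" using q y agr_id_iff assms by blast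
  have "\<forall>M\<in>Om. act q M (j,a,b) = M (j,a,b)"
  proof
    fix M assume "M \<in> Om" then obtain x where x: "inQ x" "M = pmats k p x" using Om_iff by blast
    show "act q M (j,a,b) = M (j,a,b)" unfolding x(2) y(2) act_pmats[OF y(1) x(1)] by (simp add: pmats_apply yj)
  qed
  then show "q \<in> Stab Q Om (\<lambda>M. M (j,a,b))" using q unfolding Stab_def by blast
qed

abbreviation "bt \<equiv> beta (coords k p) Q Om"

lemma beta0: assumes "bt 0 H K \<le> enat N" "H \<noteq> Q" shows "cc H 1" "1 \<le> N"
proof -
  have ni: "bt 0 H K \<noteq> \<infinity>"
  proof assume "bt 0 H K = \<infinity>" with assms(1) show False by (simp del: beta.simps) qed
  have c: "H \<subset> Q \<and> (\<exists>i\<in>coords k p. H = Stab Q Om (\<lambda>x. x i))"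
  proof (rule ccontr)
    assume "\<not> (H \<subset> Q \<and> (\<exists>i\<in>coords k p. H = Stab Q Om (\<lambda>x. x i)))"
    then have "bt 0 H K = \<infinity>" using assms(2) by (simp only: beta.simps if_False if_True)
    then show False using ni by simp
  qed
  have v: "bt 0 H K = 1" using c assms(2) by (simp only: beta.simps if_False if_True simp_thms)
  show "1 \<le> N" using assms(1) v by (simp add: one_enat_def)
  obtain j a b where jab: "j<k" "a<p" "b<p" "H = Stab Q Om (\<lambda>x. x (j,a,b))" using c unfolding coords_def by auto
  have H: "H = {q\<in>Q. agr j q id}" using jab Stab_coord by simp
  show "cc H 1" unfolding cc_def
  proof
    fix x assume x: "x \<in> Q - H"
    then have nx: "\<not> agr j x id" using H by blast
    have "cert H x {j}" unfolding cert_def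
    proof
      fix h assume "h \<in> H" then have "agr j h id" using H by blast
      then show "\<exists>j'\<in>{j}. \<not> agr j' h x" using nx agr_sym agr_trans by blast
    qed
    then show "\<exists>A\<subseteq>{..<k}. card A \<le> 1 \<and> cert H x A" using jab(1) by (intro exI[of _ "{j}"]) auto
  qed
qed

lemma core_sub: assumes "subgrp H Q" "subgrp U Q" "conj_core H U \<subseteq> H" shows "U \<subseteq> H"
proof
  fix u assume u: "u \<in> U"
  have "u \<in> conj_core H U" unfolding conj_core_def
  proof
    fix h assume h: "h \<in> H"
    have hQ: "h \<in> Q" and uQ: "u \<in> Q" using sub_Q assms h u by blast+
    have "inv h \<circ> u \<circ> h = inv h \<circ> (h \<circ> u)" using Q_comm[OF uQ hQ] by (simp add: comp_assoc)
    also have "\<dots> = u" using Q_inv(2)[OF hQ] by (simp add: o_assoc)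
    finally show "u \<in> (\<lambda>u. inv h \<circ> u \<circ> h) ` U" using u by (metis image_eqI)
  qed
  then show "u \<in> H" using assms(3) by blast
qed


lemma main: "\<forall>H K N. H \<noteq> Q \<longrightarrow> bt d H K \<le> enat N \<longrightarrow>
   (\<exists>t e. cc H t \<and> t \<le> (\<Prod>l<d. Suc (e l)) \<and> p ^ (\<Sum>l<d. e l) \<le> N)"
proof (induction d)
  case 0
  show ?case
  proof (intro allI impI)
    fix H K N assume "H \<noteq> Q" "bt 0 H K \<le> enat N"
    then have "cc H 1" "1 \<le> N" using beta0 by auto
    then show "\<exists>t e. cc H t \<and> t \<le> (\<Prod>l<0. Suc (e l)) \<and> p ^ (\<Sum>l<0. e l) \<le> N"
      by (intro exI[of _ 1] exI[of _ "\<lambda>_. 0"]) simp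
  qed
next
  case (Suc d)
  show ?case
  proof (intro allI impI)
    fix H K N assume HQ: "H \<noteq> Q" and le: "bt (Suc d) H K \<le> enat N"
    define F where "F = (\<lambda>t::nat \<times> (nat \<Rightarrow> (nat\<times>nat\<times>nat \<Rightarrow> nat\<times>nat\<times>nat) set) \<times> (nat \<Rightarrow> (nat\<times>nat\<times>nat \<Rightarrow> nat\<times>nat\<times>nat) set) \<times> (nat \<Rightarrow> (nat\<times>nat\<times>nat \<Rightarrow> nat\<times>nat\<times>nat) set) \<times> (nat \<Rightarrow> (nat\<times>nat\<times>nat \<Rightarrow> nat\<times>nat\<times>nat) set). case t of (r, Hs, Us, Ls, Vs) \<Rightarrow>
          (SUP i\<in>{..<r}. enat (idx (Hs i) (Us i)) * bt d (Us i) (Vs i)))"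
    have bte: "bt (Suc d) H K = (INF t \<in> {t. admissible Q Om H K t}. F t)" unfolding F_def by simp
    have "enat N < enat (Suc N)" by simp
    then have "(INF t \<in> {t. admissible Q Om H K t}. F t) < enat (Suc N)" using le bte by (metis le_less_trans)
    then obtain tp where tp: "admissible Q Om H K tp" "F tp < enat (Suc N)" by (auto simp: INF_less_iff)
    obtain r Hs Us Ls Vs where tpd: "tp = (r, Hs, Us, Ls, Vs)" by (cases tp) auto
    have adm: "\<forall>i<r. subgrp (Hs i) Q \<and> subgrp (Us i) Q \<and> conj_core (Hs i) (Us i) \<subseteq> Hs i"
      "Q \<inter> (\<Inter>i\<in>{..<r}. Hs i) = H" using tp(1) unfolding tpd admissible_def by auto
    have "F tp \<le> enat N" using tp(2) by (cases "F tp") auto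
    then have Fle: "\<forall>i<r. enat (idx (Hs i) (Us i)) * bt d (Us i) (Vs i) \<le> enat N"
      unfolding tpd F_def by (simp add: SUP_le_iff del: beta.simps)
    define I' where "I' = {i. i < r \<and> Hs i \<noteq> Q}"
    have step: "\<forall>i\<in>I'. \<exists>T E. cc (Hs i) T \<and> T \<le> (\<Prod>l<Suc d. Suc (E l)) \<and> p ^ (\<Sum>l<Suc d. E l) \<le> N"
    proof
      fix i assume i: "i \<in> I'"
      have ir: "i < r" and HiQ: "Hs i \<noteq> Q" using i I'_def by auto
      have sH: "subgrp (Hs i) Q" and sU: "subgrp (Us i) Q" and cs: "conj_core (Hs i) (Us i) \<subseteq> Hs i"
        using adm(1) ir by auto
      have UH: "Us i \<subseteq> Hs i" using core_sub[OF sH sU cs] .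
      have HsQ: "Hs i \<subseteq> Q" using sub_Q[OF sH] by blast
      have UQ: "Us i \<noteq> Q" using UH HsQ HiQ by blast
      obtain a b where ab: "card (Hs i) = p ^ a" "card (Us i) = p ^ b" using sub_card sH sU by metis
      have "p ^ b \<le> p ^ a" using card_mono[OF sub_fin[OF sH] UH] ab by simp
      then have ba: "b \<le> a" using p2 power_le_imp_le_exp[of p b a] by simp
      define e where "e = a - b"
      have "p ^ a = p ^ e * p ^ b" unfolding e_def using ba by (simp add: power_add[symmetric])
      then have cardH: "card (Hs i) = p ^ e * card (Us i)" using ab by simp
      have cUp: "card (Us i) > 0" using sub_pos[OF sU] .
      have "Hs i \<inter> Us i = Us i" using UH by blast
      then have idx: "idx (Hs i) (Us i) = p ^ e" unfolding idx_def cardH using cUp by simp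
      have "enat (idx (Hs i) (Us i)) * bt d (Us i) (Vs i) \<le> enat N" using Fle ir by blast
      then have pr1: "enat (p ^ e) * bt d (Us i) (Vs i) \<le> enat N" unfolding idx .
      have pe0: "p ^ e \<noteq> 0" using p2 by simp
      obtain N' where N': "bt d (Us i) (Vs i) = enat N'"
      proof (cases "bt d (Us i) (Vs i)")
        case (enat n) then show ?thesis using that by blast
      next
        case infinity
        then have "enat (p ^ e) * bt d (Us i) (Vs i) = \<infinity>" using pe0 by (simp add: zero_enat_def)
        then show ?thesis using pr1 by simp
      qed
      have pN: "p ^ e * N' \<le> N" using pr1 N' by simp
      have "bt d (Us i) (Vs i) \<le> enat N'" using N' by simp
      from Suc.IH[rule_format, OF UQ this]
      obtain t' e' where te: "cc (Us i) t'" "t' \<le> (\<Prod>l<d. Suc (e' l))" "p ^ (\<Sum>l<d. e' l) \<le> N'"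
        by blast
      have ccH: "cc (Hs i) (Suc e * t')" using cert_lift[OF sU te(1) sH UH] cardH by simp
      define E where "E = case_nat e e'"
      have pE: "(\<Prod>l<Suc d. Suc (E l)) = Suc e * (\<Prod>l<d. Suc (e' l))" unfolding prod.lessThan_Suc_shift by (simp add: E_def)
      have sE: "(\<Sum>l<Suc d. E l) = e + (\<Sum>l<d. e' l)" unfolding sum.lessThan_Suc_shift by (simp add: E_def)
      have "Suc e * t' \<le> (\<Prod>l<Suc d. Suc (E l))" unfolding pE using te(2) by (rule mult_le_mono2)
      moreover have "p ^ (\<Sum>l<Suc d. E l) \<le> N"
      proof -
        have "p ^ (\<Sum>l<Suc d. E l) = p ^ e * p ^ (\<Sum>l<d. e' l)" unfolding sE by (simp add: power_add)
        also have "\<dots> \<le> p ^ e * N'" using te(3) by simp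
        finally show ?thesis using pN by simp
      qed
      ultimately show "\<exists>T E. cc (Hs i) T \<and> T \<le> (\<Prod>l<Suc d. Suc (E l)) \<and> p ^ (\<Sum>l<Suc d. E l) \<le> N"
        using ccH by (intro exI[of _ "Suc e * t'"] exI[of _ E]) blast
    qed
    obtain Tf where "\<forall>i\<in>I'. \<exists>E. cc (Hs i) (Tf i) \<and> Tf i \<le> (\<Prod>l<Suc d. Suc (E l)) \<and> p ^ (\<Sum>l<Suc d. E l) \<le> N"
      using bchoice[OF step] by blast
    then have st2: "\<forall>i\<in>I'. \<exists>E. cc (Hs i) (Tf i) \<and> Tf i \<le> (\<Prod>l<Suc d. Suc (E l)) \<and> p ^ (\<Sum>l<Suc d. E l) \<le> N" .
    obtain Ef where TE: "\<forall>i\<in>I'. cc (Hs i) (Tf i) \<and> Tf i \<le> (\<Prod>l<Suc d. Suc (Ef i l)) \<and> p ^ (\<Sum>l<Suc d. Ef i l) \<le> N"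
      using bchoice[OF st2] by blast
    have HsQ: "H \<subseteq> Q" using adm(2) by blast
    have HHs: "\<And>i. i < r \<Longrightarrow> H \<subseteq> Hs i" using adm(2) by blast
    have ex: "\<exists>i\<in>I'. x \<notin> Hs i" if x: "x \<in> Q" "x \<notin> H" for x
    proof -
      have "\<not> (\<forall>i<r. x \<in> Hs i)" using x adm(2) by blast
      then obtain i where "i < r" "x \<notin> Hs i" by blast
      then show ?thesis using x(1) unfolding I'_def by blast
    qed
    obtain x0 where "x0 \<in> Q" "x0 \<notin> H" using HQ HsQ by blast
    then have I'ne: "I' \<noteq> {}" using ex by blast
    have I'fin: "finite I'" unfolding I'_def by simp
    define m where "m = Max (Tf ` I')"
    have "m \<in> Tf ` I'" unfolding m_def using I'ne I'fin by simp
    then obtain i0 where i0: "i0 \<in> I'" "Tf i0 = m" by blast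
    have mx: "\<And>i. i \<in> I' \<Longrightarrow> Tf i \<le> Tf i0" unfolding i0(2) m_def using I'fin by simp
    have "cc H (Tf i0)" unfolding cc_def
    proof
      fix x assume x: "x \<in> Q - H"
      then obtain i where i: "i \<in> I'" "x \<notin> Hs i" using ex by blast
      then obtain A where A: "A \<subseteq> {..<k}" "card A \<le> Tf i" "cert (Hs i) x A"
        using TE x unfolding cc_def by blast
      have "cert H x A" using A(3) HHs[of i] i(1) unfolding cert_def I'_def by blast
      then show "\<exists>A\<subseteq>{..<k}. card A \<le> Tf i0 \<and> cert H x A" using A(1,2) mx[OF i(1)] by (meson le_trans)
    qed
    then show "\<exists>t e. cc H t \<and> t \<le> (\<Prod>l<Suc d. Suc (e l)) \<and> p ^ (\<Sum>l<Suc d. e l) \<le> N"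
      using TE i0(1) by blast
  qed
qed

end



context S6 begin

abbreviation "PP \<equiv> Pgrp k p Cp"
definition prodC :: "(nat \<Rightarrow> nat \<Rightarrow> nat) \<Rightarrow> nat \<Rightarrow> nat" where
  "prodC x = foldr (\<circ>) (map x [0..<k]) id"

lemma fold_in: "(\<forall>j\<in>set ns. x j \<in> Cp) \<Longrightarrow> foldr (\<circ>) (map x ns) id \<in> Cp"
  by (induction ns) (auto simp: id_C C_comp)

lemma fold_mult: "(\<forall>j\<in>set ns. x j \<in> Cp \<and> y j \<in> Cp) \<Longrightarrow>
  foldr (\<circ>) (map (\<lambda>j. x j \<circ> y j) ns) id = foldr (\<circ>) (map x ns) id \<circ> foldr (\<circ>) (map y ns) id"
proof (induction ns)
  case Nil then show ?case by simp
next
  case (Cons a ns)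
  let ?X = "foldr (\<circ>) (map x ns) id" and ?Y = "foldr (\<circ>) (map y ns) id"
  have X: "?X \<in> Cp" using Cons.prems by (intro fold_in) simp
  have ya: "y a \<in> Cp" using Cons.prems by simp
  have IH: "foldr (\<circ>) (map (\<lambda>j. x j \<circ> y j) ns) id = ?X \<circ> ?Y" by (rule Cons.IH) (use Cons.prems in simp)
  have "foldr (\<circ>) (map (\<lambda>j. x j \<circ> y j) (a # ns)) id = (x a \<circ> y a) \<circ> (?X \<circ> ?Y)"
    by (simp only: list.map foldr.simps o_apply IH)
  also have "\<dots> = x a \<circ> (y a \<circ> ?X) \<circ> ?Y" by (simp add: comp_assoc)
  also have "\<dots> = x a \<circ> (?X \<circ> y a) \<circ> ?Y" using C_comm[OF ya X] by simp
  also have "\<dots> = (x a \<circ> ?X) \<circ> (y a \<circ> ?Y)" by (simp add: comp_assoc)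
  also have "\<dots> = foldr (\<circ>) (map x (a # ns)) id \<circ> foldr (\<circ>) (map y (a # ns)) id"
    by (simp only: list.map foldr.simps o_apply)
  finally show ?case .
qed

lemma fold_id: "foldr (\<circ>) (map (\<lambda>j. id) ns) id = id" by (induction ns) auto

lemma foldr_cons_id: "foldr (\<circ>) (map f (a#ns)) id = f a \<circ> foldr (\<circ>) (map f ns) id"
  by (simp only: list.map foldr.simps o_apply)

lemma fold_single: "distinct ns \<Longrightarrow>
  foldr (\<circ>) (map (\<lambda>i. if i = i0 then c else id) ns) id = (if i0 \<in> set ns then c else id)"
proof (induction ns)
  case Nil show ?case by simp
next
  case (Cons a ns)
  have IH: "foldr (\<circ>) (map (\<lambda>i. if i = i0 then c else id) ns) id = (if i0 \<in> set ns then c else id)"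
    by (rule Cons.IH) (use Cons.prems in simp)
  show ?case
  proof (cases "a = i0")
    case True
    then have "i0 \<notin> set ns" using Cons.prems by simp
    then have r: "foldr (\<circ>) (map (\<lambda>i. if i = i0 then c else id) ns) id = id" using IH by simp
    show ?thesis unfolding foldr_cons_id r using True by simp
  next
    case False
    show ?thesis unfolding foldr_cons_id IH using False by simp
  qed
qed

lemma prodC_cong: "(\<And>j. j < k \<Longrightarrow> x j = y j) \<Longrightarrow> prodC x = prodC y"
proof -
  assume a: "\<And>j. j < k \<Longrightarrow> x j = y j"
  have e: "map x [0..<k] = map y [0..<k]" by (rule map_cong) (auto simp: a)
  show ?thesis unfolding prodC_def e ..
qed

lemma prodC_mult: "inQ x \<Longrightarrow> inQ y \<Longrightarrow> prodC (\<lambda>j. x j \<circ> y j) = prodC x \<circ> prodC y"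
  unfolding prodC_def inQ_def by (rule fold_mult) auto

lemma P_iff: assumes "inQ x" shows "qperm k p x \<in> PP \<longleftrightarrow> prodC x = id"
proof
  assume "qperm k p x \<in> PP"
  then obtain y where y: "qperm k p x = qperm k p y" "inQ y" "prodC y = id"
    unfolding Pgrp_def inQ_def prodC_def by blast
  have "prodC x = prodC y" using qperm_eq[OF assms y(2) y(1)] by (rule prodC_cong)
  then show "prodC x = id" using y(3) by simp
next
  assume "prodC x = id" then show "qperm k p x \<in> PP" using assms unfolding Pgrp_def inQ_def prodC_def by blast
qed

lemma P_Q: "PP \<subseteq> Q" unfolding Pgrp_def Qgrp_def by blast

lemma P_sub: "subgrp PP Q"
  unfolding subgrp_def
proof (intro conjI ballI)
  show "PP \<subseteq> Q" by (rule P_Q)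
  show "id \<in> PP" using P_iff[OF inQ_id] qperm_id unfolding prodC_def by (simp add: fold_id)
next
  fix a b assume a: "a \<in> PP" and b: "b \<in> PP"
  obtain x where x: "inQ x" "a = qperm k p x" using a P_Q Q_iff by blast
  obtain y where y: "inQ y" "b = qperm k p y" using b P_Q Q_iff by blast
  have "a \<circ> b = qperm k p (\<lambda>j. x j \<circ> y j)" using x y qperm_comp by simp
  moreover have "prodC (\<lambda>j. x j \<circ> y j) = id" using prodC_mult[OF x(1) y(1)] P_iff x y a b by simp
  ultimately show "a \<circ> b \<in> PP" using P_iff inQ_comp x(1) y(1) by simp
next
  fix a assume a: "a \<in> PP"
  obtain x where x: "inQ x" "a = qperm k p x" using a P_Q Q_iff by blast
  have ia: "inv a = qperm k p (\<lambda>j. inv (x j))" using qperm_inv x by simp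
  have "prodC (\<lambda>j. inv (x j)) \<circ> prodC x = prodC (\<lambda>j. inv (x j) \<circ> x j)"
    using prodC_mult[OF inQ_inv[OF x(1)] x(1)] by simp
  also have "\<dots> = prodC (\<lambda>_. id)" by (rule prodC_cong) (use x(1) C_inv(2) inQ_def in auto)
  also have "\<dots> = id" unfolding prodC_def by (simp add: fold_id)
  finally have "prodC (\<lambda>j. inv (x j)) = id" using P_iff x a by simp
  then show "inv a \<in> PP" using ia P_iff inQ_inv[OF x(1)] by simp
qed

definition x0 :: "nat \<Rightarrow> nat \<Rightarrow> nat" where "x0 = (\<lambda>i. if i = 0 then g else id)"

lemma x0_Q: "inQ x0" unfolding inQ_def x0_def using g_C id_C by simp
lemma x0_notP: "qperm k p x0 \<notin> PP"
proof -
  have "prodC x0 = g" unfolding prodC_def x0_def using fold_single[of "[0..<k]" 0 g] k1 by simp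
  then show ?thesis using P_iff[OF x0_Q] g_ne by simp
qed

lemma P_ne: "PP \<noteq> Q" using x0_notP qperm_Q[OF x0_Q] by blast

lemma cc_P: assumes "cc PP t" shows "k \<le> t"
proof (rule ccontr)
  assume "\<not> k \<le> t"
  obtain A where A: "A \<subseteq> {..<k}" "card A \<le> t" "cert PP (qperm k p x0) A"
    using assms x0_notP qperm_Q[OF x0_Q] unfolding cc_def by blast
  have "card A < card {..<k}" using A(2) \<open>\<not> k \<le> t\<close> by simp
  then have "A \<noteq> {..<k}" by auto
  then obtain j where j: "j < k" "j \<notin> A" using A(1) by blast
  define y where "y = (\<lambda>i. if i = j then (if j = 0 then id else inv g) else x0 i)"
  have iC: "inv g \<in> Cp" using C_inv(1)[OF g_C] .
  have yQ: "inQ y" unfolding y_def inQ_def using x0_Q iC id_C inQ_def by auto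
  have "prodC y = id"
  proof (cases "j = 0")
    case True
    then have "prodC y = prodC (\<lambda>_. id)" by (intro prodC_cong) (simp add: y_def x0_def)
    then show ?thesis unfolding prodC_def by (simp add: fold_id)
  next
    case False
    define y1 where "y1 = (\<lambda>i::nat. if i = 0 then g else id)"
    define y2 where "y2 = (\<lambda>i::nat. if i = j then inv g else id)"
    have 1: "inQ y1" "inQ y2" unfolding y1_def y2_def inQ_def using g_C iC id_C by auto
    have "prodC y = prodC (\<lambda>i. y1 i \<circ> y2 i)" by (intro prodC_cong) (use False in \<open>simp add: y_def x0_def y1_def y2_def\<close>)
    also have "\<dots> = prodC y1 \<circ> prodC y2" using prodC_mult[OF 1] .
    also have "prodC y1 = g" unfolding prodC_def y1_def using fold_single[of "[0..<k]" 0 g] k1 by simp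
    also have "prodC y2 = inv g" unfolding prodC_def y2_def using fold_single[of "[0..<k]" j "inv g"] j(1) by simp
    finally have "prodC y = g \<circ> inv g" .
    then show ?thesis using C_inv(3)[OF g_C] by (simp only:)
  qed
  then have hP: "qperm k p y \<in> PP" using P_iff[OF yQ] by simp
  have "\<forall>i\<in>A. agr i (qperm k p y) (qperm k p x0)"
  proof
    fix i assume i: "i \<in> A"
    then have "i < k" "i \<noteq> j" using A(1) j by auto
    then show "agr i (qperm k p y) (qperm k p x0)" using agr_qperm by (simp add: y_def)
  qed
  then show False using A(3) hP unfolding cert_def by blast
qed

end




lemma real_part:
  fixes d k p N :: nat and e :: "nat \<Rightarrow> nat"
  assumes d: "d \<ge> 1" and kp: "k \<le> (\<Prod>l<d. Suc (e l))" and pN: "p ^ (\<Sum>l<d. e l) \<le> N" and p2: "p \<ge> 2"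
    and k1: "k \<ge> 1"
  shows "real p powr (real d * (real k powr (1 / real d) - 1)) \<le> real N"
proof -
  let ?x = "\<lambda>l. real (Suc (e l))"
  have am: "(\<Sum>l\<in>{..<d}. ?x l / card {..<d}) \<ge> (\<Prod>l\<in>{..<d}. ?x l) powr (1 / card {..<d})"
  proof (rule arith_geom_mean)
    show "{..<d} \<noteq> {}" using d by (simp add: lessThan_empty_iff)
  qed auto
  have s1: "(\<Sum>l\<in>{..<d}. ?x l / card {..<d}) = (real d + real (\<Sum>l<d. e l)) / real d"
    by (simp add: sum_divide_distrib[symmetric] sum.distrib)
  have p1: "(\<Prod>l\<in>{..<d}. ?x l) = real (\<Prod>l<d. Suc (e l))" by simp
  have "real k powr (1 / real d) \<le> real (\<Prod>l<d. Suc (e l)) powr (1 / real d)"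
  proof (rule powr_mono2)
    show "real k \<le> real (\<Prod>l<d. Suc (e l))" using kp by (simp only: of_nat_le_iff)
  qed auto
  also have "\<dots> \<le> (real d + real (\<Sum>l<d. e l)) / real d" using am s1 p1 by simp
  finally have "real k powr (1 / real d) \<le> (real d + real (\<Sum>l<d. e l)) / real d" .
  then have "real d * (real k powr (1 / real d)) \<le> real d + real (\<Sum>l<d. e l)"
    using d by (simp add: field_simps)
  then have ex: "real d * (real k powr (1 / real d) - 1) \<le> real (\<Sum>l<d. e l)" by (simp add: algebra_simps)
  have "real p powr (real d * (real k powr (1 / real d) - 1)) \<le> real p powr real (\<Sum>l<d. e l)"
    using ex p2 by (intro powr_mono) auto
  also have "\<dots> = real (p ^ (\<Sum>l<d. e l))" using p2 powr_realpow[of "real p" "\<Sum>l<d. e l"] by (simp del: of_nat_sum)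
  also have "\<dots> \<le> real N" using pN by simp
  finally show ?thesis .
qed

context S6 begin

lemma pmats_inj: assumes "inQ x" "inQ x'" "pmats k p x = pmats k p x'" "j < k" shows "x j = x' j"
proof
  fix b show "x j b = x' j b"
  proof (cases "b < p")
    case True
    have xC: "x j \<in> Cp" using assms inQ_def by blast
    have "x j b < p" using C_lt[OF xC True] .
    then have "pmats k p x (j, x j b, b)" using True assms(4) by (simp add: pmats_apply)
    then have "pmats k p x' (j, x j b, b)" using assms(3) by simp
    then show ?thesis by (simp add: pmats_apply)
  next
    case False then show ?thesis using assms C_out inQ_def by metis
  qed
qed

definition fP :: "(nat\<times>nat\<times>nat \<Rightarrow> bool) \<Rightarrow> bool" where
  "fP M \<longleftrightarrow> (\<exists>x. inQ x \<and> M = pmats k p x \<and> prodC x = id)"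

lemma fP_pmats: assumes "inQ x" shows "fP (pmats k p x) \<longleftrightarrow> prodC x = id"
proof
  assume "fP (pmats k p x)"
  then obtain x' where x': "inQ x'" "pmats k p x = pmats k p x'" "prodC x' = id" unfolding fP_def by blast
  have "prodC x = prodC x'" using pmats_inj[OF assms x'(1) x'(2)] by (rule prodC_cong)
  then show "prodC x = id" using x'(3) by simp
qed (use assms fP_def in blast)

lemma Stab_fP: "Stab Q Om fP = PP"
proof (rule equalityI; rule subsetI)
  fix q assume q: "q \<in> Stab Q Om fP"
  then have qQ: "q \<in> Q" and st: "\<forall>M\<in>Om. fP (act q M) = fP M" unfolding Stab_def by auto
  obtain y where y: "inQ y" "q = qperm k p y" using qQ Q_iff by blast
  have M: "pmats k p (\<lambda>_. id) \<in> Om" using Om_iff inQ_id by blast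
  have "fP (pmats k p (\<lambda>_. id))" using fP_pmats[OF inQ_id] unfolding prodC_def by (simp add: fold_id)
  then have "fP (act q (pmats k p (\<lambda>_. id)))" using st M by blast
  then have "fP (pmats k p y)" unfolding y(2) act_pmats[OF y(1) inQ_id] by simp
  then have "prodC y = id" using fP_pmats[OF y(1)] by simp
  then show "q \<in> PP" using P_iff[OF y(1)] y(2) by simp
next
  fix q assume q: "q \<in> PP"
  then have qQ: "q \<in> Q" using P_Q by blast
  obtain y where y: "inQ y" "q = qperm k p y" using qQ Q_iff by blast
  have py: "prodC y = id" using P_iff[OF y(1)] q y(2) by simp
  have "\<forall>M\<in>Om. fP (act q M) = fP M"
  proof
    fix M assume "M \<in> Om" then obtain x where x: "inQ x" "M = pmats k p x" using Om_iff by blast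
    have "fP (act q M) \<longleftrightarrow> prodC (\<lambda>j. y j \<circ> x j) = id"
      unfolding x(2) y(2) act_pmats[OF y(1) x(1)] by (rule fP_pmats[OF inQ_comp[OF y(1) x(1)]])
    also have "\<dots> \<longleftrightarrow> prodC x = id" using prodC_mult[OF y(1) x(1)] py by simp
    also have "\<dots> \<longleftrightarrow> fP M" unfolding x(2) using fP_pmats[OF x(1)] by simp
    finally show "fP (act q M) = fP M" .
  qed
  then show "q \<in> Stab Q Om fP" using qQ unfolding Stab_def by blast
qed

lemma P_Bset: "PP \<in> Bset Q Om" unfolding Bset_def using Stab_fP by blast

lemma P_Nset: "PP \<in> Nset Q Om"
proof -
  have "Stab Q Om (\<lambda>M. if fP M then 1 else (0::nat)) = Stab Q Om fP" unfolding Stab_def by (simp; blast)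
  then show ?thesis unfolding Nset_def using Stab_fP by blast
qed

lemma core_id: "id \<in> H \<Longrightarrow> conj_core H U \<subseteq> U"
  unfolding conj_core_def by auto

lemma mono_bt: "bt (Suc d) PP PP \<le> bt d PP PP"
proof -
  define t0 where "t0 = (1::nat, (\<lambda>_::nat. PP), (\<lambda>_::nat. PP), (\<lambda>_::nat. PP), (\<lambda>_::nat. PP))"
  have idP: "id \<in> PP" using sub_id[OF P_sub] .
  have "admissible Q Om PP PP t0" unfolding t0_def admissible_def
    using P_sub P_Nset P_Bset core_id[OF idP, of PP] P_Q by auto
  then have "bt (Suc d) PP PP \<le> (case t0 of (r, Hs, Us, Ls, Vs) \<Rightarrow>
          (SUP i\<in>{..<r}. enat (idx (Hs i) (Us i)) * bt d (Us i) (Vs i)))"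
    unfolding beta.simps(2) by (rule INF_lower[OF CollectI])
  also have "\<dots> = enat (idx PP PP) * bt d PP PP" unfolding t0_def by (simp add: lessThan_Suc)
  also have "idx PP PP = 1" unfolding idx_def using sub_pos[OF P_sub] by simp
  finally have fin: "bt (Suc d) PP PP \<le> enat 1 * bt d PP PP" .
  have e1: "enat 1 = 1" by (simp add: one_enat_def)
  show ?thesis using fin unfolding e1 by (simp only: mult_1)
qed

lemma bound: assumes "bt d PP PP = enat N" shows "\<exists>e. k \<le> (\<Prod>l<d. Suc (e l)) \<and> p ^ (\<Sum>l<d. e l) \<le> N"
proof -
  have "bt d PP PP \<le> enat N" using assms by simp
  from main[rule_format, OF P_ne this] obtain t e where
    te: "cc PP t" "t \<le> (\<Prod>l<d. Suc (e l))" "p ^ (\<Sum>l<d. e l) \<le> N" by blast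
  then show ?thesis using cc_P[OF te(1)] by (intro exI[of _ e]) auto
qed

lemma final: "(\<forall>d\<ge>1. ereal (real p powr (real d * (real k powr (1 / real d) - 1)))
            \<le> ereal_of_enat (bt d PP PP))
        \<and> ereal (real p powr (log 2 (real k)))
            \<le> ereal_of_enat (beta_lim (coords k p) Q Om PP PP)"
proof (intro conjI allI impI)
  fix d :: nat assume d: "d \<ge> 1"
  show "ereal (real p powr (real d * (real k powr (1 / real d) - 1))) \<le> ereal_of_enat (bt d PP PP)"
  proof (cases "bt d PP PP")
    case (enat N)
    obtain e where e: "k \<le> (\<Prod>l<d. Suc (e l))" "p ^ (\<Sum>l<d. e l) \<le> N" using bound[OF enat] by blast
    have "real p powr (real d * (real k powr (1 / real d) - 1)) \<le> real N"
      using real_part[OF d e p2 k1] .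
    then show ?thesis using enat by simp
  qed simp
next
  define m0 where "m0 = (LEAST m. k \<le> 2 ^ m)"
  have km0: "k \<le> 2 ^ m0" unfolding m0_def by (rule LeastI[of _ k]) (simp add: less_imp_le less_exp)
  have lb: "enat (p ^ m0) \<le> bt d PP PP" for d
  proof (cases "bt d PP PP")
    case (enat N)
    obtain e where e: "k \<le> (\<Prod>l<d. Suc (e l))" "p ^ (\<Sum>l<d. e l) \<le> N" using bound[OF enat] by blast
    have "(\<Prod>l<d. Suc (e l)) \<le> (\<Prod>l<d. (2::nat) ^ (e l))"
      by (intro prod_mono) (simp add: Suc_leI less_exp)
    also have "\<dots> = 2 ^ (\<Sum>l<d. e l)" by (simp add: power_sum)
    finally have "k \<le> 2 ^ (\<Sum>l<d. e l)" using e(1) by simp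
    then have "m0 \<le> (\<Sum>l<d. e l)" unfolding m0_def by (rule Least_le)
    then have "p ^ m0 \<le> p ^ (\<Sum>l<d. e l)" using p2 by (intro power_increasing) auto
    then show ?thesis using e(2) enat by simp
  qed simp
  have dec: "decseq (\<lambda>d. bt d PP PP)" unfolding decseq_Suc_iff using mono_bt by blast
  have lim: "beta_lim (coords k p) Q Om PP PP = (INF d. bt d PP PP)"
    unfolding beta_lim_def by (rule limI[OF LIMSEQ_INF[OF dec]])
  have "enat (p ^ m0) \<le> (INF d. bt d PP PP)" by (rule INF_greatest) (use lb in blast)
  then have A: "ereal (real (p ^ m0)) \<le> ereal_of_enat (beta_lim (coords k p) Q Om PP PP)"
    unfolding lim by (metis ereal_of_enat_le_iff ereal_of_enat_simps(1))
  have "log 2 (real k) \<le> real m0"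
  proof -
    have "real k \<le> 2 powr real m0" using km0 by (simp add: powr_realpow)
    then show ?thesis using k1 by (simp add: log_le_iff)
  qed
  then have "real p powr (log 2 (real k)) \<le> real p powr real m0" using p2 by (intro powr_mono) auto
  also have "\<dots> = real (p ^ m0)" using p2 by (simp add: powr_realpow)
  finally show "ereal (real p powr (log 2 (real k))) \<le> ereal_of_enat (beta_lim (coords k p) Q Om PP PP)"
    using A by (meson ereal_less_eq(3) order_trans)
qed

end

theorem theorem6p18:
  fixes p k :: nat and Cp :: "(nat \<Rightarrow> nat) set"
  assumes "prime p"
    and "k \<ge> 1"
    and "\<forall>x\<in>Cp. x permutes {..<p}"
    and "\<exists>g. Cp = range (\<lambda>i. g ^^ i)"
    and "card Cp = p"
    and "\<forall>a<p. \<forall>b<p. \<exists>!x. x \<in> Cp \<and> x a = b"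
  shows "(\<forall>d\<ge>1. ereal (real p powr (real d * (real k powr (1 / real d) - 1)))
            \<le> ereal_of_enat (beta (coords k p) (Qgrp k p Cp) (Omega k p Cp) d (Pgrp k p Cp) (Pgrp k p Cp)))
        \<and> ereal (real p powr (log 2 (real k)))
            \<le> ereal_of_enat (beta_lim (coords k p) (Qgrp k p Cp) (Omega k p Cp) (Pgrp k p Cp) (Pgrp k p Cp))"
proof -
  obtain g where g: "Cp = range (\<lambda>i. g ^^ i)" using assms(4) by blast
  interpret S6 p k Cp g using assms g by unfold_locales auto
  show ?thesis using final .
qed


end
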